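(* For integers $k,l\geq1$ with $k+l\leq n$, the set $T_{k,l,n}$ is a Jacobi subset of $S_n$; that is, $\sum_{\sigma\in T_{k,l,n}}[a_{\sigma(1)},\dots,a_{\sigma(n)}]=0$ for all elements $a_1,\dots,a_n$ of every Lie ring.
   Context: A Lie ring is a Lie algebra over $\mathbb Z$; the left-normed bracket is $[a_1]=a_1$, $[a_1,\dots,a_n]=[[a_1,\dots,a_{n-1}],a_n]$. $S_m$ is the symmetric group on $\{1,\dots,m\}$ with product given by composition. A subset $T\subseteq S_n$ is Jacobi if $\sum_{\sigma\in T}[a_{\sigma(1)},\dots,a_{\sigma(n)}]=0$ for all elements $a_1,\dots,a_n$ of every Lie ring. For $m\leq n$, $\iota_{m,n}:S_m\hookrightarrow S_n$ is the canonical embedding. An $(s,t)$-shuffle is a pair $(\alpha,\beta)$ of strictly increasing maps $\alpha:\{1,\dots,s\}\to\{1,\dots,s+t\}$, $\beta:\{1,\dots,t\}\to\{1,\dots,s+t\}$ with disjoint images; ${\sf Sh}^1(s,t)$ is the set of those with $\alpha(1)=1$. For $p,q\geq1$, $0\leq i\leq q-1$ and $(\alpha,\beta)\in{\sf Sh}^1(q-i,i)$, let $\tilde\sigma_{\alpha,\beta,p,q}\in S_{p+q}$ be given by $\tilde\sigma(j)=j$ for $1\leq j\leq p$, $\tilde\sigma(p+j)=p+\beta(i+1-j)$ for $1\leq j\leq i$, $\tilde\sigma(p+i+j)=p+\alpha(j)$ for $1\leq j\leq q-i$; let $\sigma_{\alpha,\beta,p,q}=\tilde\sigma_{\alpha,\beta,p,q}\circ(1,2)^i$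 where $(1,2)$ is the transposition. Set $C_{p,q}=\{\sigma_{\alpha,\beta,p,q}\mid 0\leq i\leq q-1,\ (\alpha,\beta)\in{\sf Sh}^1(q-i,i)\}\subseteq S_{p+q}$. $\Phi_{k,l}\in S_{k+l}$ is defined by $\Phi_{k,l}(i)=i+k$ if $i\leq l$ and $\Phi_{k,l}(i)=i-l$ if $i>l$. Define $T_{k,l}=C_{k,l}\cup\{\Phi_{k,l}\circ\tau\mid\tau\in C_{l,k}\}\subseteq S_{k+l}$ and $T_{k,l,n}=\iota_{k+l,n}(T_{k,l})\subseteq S_n$. *)

theory Defs
  imports "HOL-Combinatorics.Combinatorics"
begin

definition lie_ring :: "('a::ab_group_add \<Rightarrow> 'a \<Rightarrow> 'a) \<Rightarrow> bool" where
  "lie_ring br \<longleftrightarrow>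
     (\<forall>x y z. br (x + y) z = br x z + br y z) \<and>
     (\<forall>x y z. br x (y + z) = br x y + br x z) \<and>
     (\<forall>x. br x x = 0) \<and>
     (\<forall>x y z. br (br x y) z + br (br y z) x + br (br z x) y = 0)"

fun left_normed :: "('a \<Rightarrow> 'a \<Rightarrow> 'a) \<Rightarrow> 'a list \<Rightarrow> 'a" where
  "left_normed br [] = undefined"
| "left_normed br (x # xs) = foldl br x xs"

definition perm_bracket :: "('a \<Rightarrow> 'a \<Rightarrow> 'a) \<Rightarrow> nat \<Rightarrow> (nat \<Rightarrow> 'a) \<Rightarrow> (nat \<Rightarrow> nat) \<Rightarrow> 'a" where
  "perm_bracket br n a \<sigma> = left_normed br (map (\<lambda>j. a (\<sigma> j)) [1..<n+1])"

definition jacobi_in :: "('a::ab_group_add \<Rightarrow> 'a \<Rightarrow> 'a) \<Rightarrow> nat \<Rightarrow> (nat \<Rightarrow> nat) set \<Rightarrow> bool" where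
  "jacobi_in br n T \<longleftrightarrow> (\<forall>a. (\<Sum>\<sigma>\<in>T. perm_bracket br n a \<sigma>) = 0)"

definition shuffle1 :: "nat \<Rightarrow> nat \<Rightarrow> ((nat \<Rightarrow> nat) \<times> (nat \<Rightarrow> nat)) set" where
  "shuffle1 s t = {(\<alpha>, \<beta>).
      strict_mono_on {1..s} \<alpha> \<and> strict_mono_on {1..t} \<beta> \<and>
      \<alpha> ` {1..s} \<subseteq> {1..s+t} \<and> \<beta> ` {1..t} \<subseteq> {1..s+t} \<and>
      \<alpha> ` {1..s} \<inter> \<beta> ` {1..t} = {} \<and> \<alpha> 1 = 1}"

definition sigma_tilde :: "(nat \<Rightarrow> nat) \<Rightarrow> (nat \<Rightarrow> nat) \<Rightarrow> nat \<Rightarrow> nat \<Rightarrow> nat \<Rightarrow> nat \<Rightarrow> nat" where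
  "sigma_tilde \<alpha> \<beta> p q i j =
     (if 1 \<le> j \<and> j \<le> p then j
      else if p + 1 \<le> j \<and> j \<le> p + i then p + \<beta> (i + 1 - (j - p))
      else if p + i + 1 \<le> j \<and> j \<le> p + q then p + \<alpha> (j - p - i)
      else j)"

definition sigma_perm :: "(nat \<Rightarrow> nat) \<Rightarrow> (nat \<Rightarrow> nat) \<Rightarrow> nat \<Rightarrow> nat \<Rightarrow> nat \<Rightarrow> nat \<Rightarrow> nat" where
  "sigma_perm \<alpha> \<beta> p q i = sigma_tilde \<alpha> \<beta> p q i \<circ> ((transpose (1::nat) 2) ^^ i)"

definition C_set :: "nat \<Rightarrow> nat \<Rightarrow> (nat \<Rightarrow> nat) set" where
  "C_set p q = {sigma_perm \<alpha> \<beta> p q i | i \<alpha> \<beta>. i \<le> q - 1 \<and> (\<alpha>, \<beta>) \<in> shuffle1 (q - i) i}"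

definition Phi :: "nat \<Rightarrow> nat \<Rightarrow> nat \<Rightarrow> nat" where
  "Phi k l i = (if 1 \<le> i \<and> i \<le> l then i + k else if l < i \<and> i \<le> k + l then i - l else i)"

definition T_set :: "nat \<Rightarrow> nat \<Rightarrow> (nat \<Rightarrow> nat) set" where
  "T_set k l = C_set k l \<union> {Phi k l \<circ> \<tau> | \<tau>. \<tau> \<in> C_set l k}"

definition iota :: "nat \<Rightarrow> nat \<Rightarrow> (nat \<Rightarrow> nat) \<Rightarrow> nat \<Rightarrow> nat" where
  "iota m n \<sigma> j = (if 1 \<le> j \<and> j \<le> m then \<sigma> j else j)"

definition T_set_n :: "nat \<Rightarrow> nat \<Rightarrow> nat \<Rightarrow> (nat \<Rightarrow> nat) set" where
  "T_set_n k l n = iota (k + l) n ` T_set k l"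

end

theory Submission
  imports Defs
begin


lemma lr_add1: "lie_ring br \<Longrightarrow> br (x + y) z = br x z + br y z" by (simp add: lie_ring_def)
lemma lr_add2: "lie_ring br \<Longrightarrow> br x (y + z) = br x y + br x z" by (simp add: lie_ring_def)
lemma lr_alt: "lie_ring br \<Longrightarrow> br x x = 0" by (simp add: lie_ring_def)
lemma lr_jac: "lie_ring br \<Longrightarrow> br (br x y) z + br (br y z) x + br (br z x) y = 0" by (simp add: lie_ring_def)

lemma lr_zero1: "lie_ring br \<Longrightarrow> br 0 z = 0"
  using lr_add1[of br 0 0 z] by simp
lemma lr_neg1: "lie_ring br \<Longrightarrow> br (- x) z = - br x z"
  using lr_add1[of br x "-x" z] lr_zero1[of br z] by (metis add.inverse_unique add.right_inverse)
lemma lr_zero2: "lie_ring br \<Longrightarrow> br z 0 = 0"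
  using lr_add2[of br z 0 0] by simp
lemma lr_anti: "lie_ring br \<Longrightarrow> br y x = - br x y"
proof -
  assume L: "lie_ring br"
  have "br (x + y) (x + y) = 0" using L lr_alt by blast
  then have "br x x + br x y + (br y x + br y y) = 0" using L by (simp add: lr_add1 lr_add2)
  then have "br x y + br y x = 0" using L lr_alt[of br] by simp
  then show ?thesis by (simp add: eq_neg_iff_add_eq_0 add.commute)
qed

lemma lr_jac2: "lie_ring br \<Longrightarrow> br X (br Y c) = br (br X Y) c - br (br X c) Y"
proof -
  assume L: "lie_ring br"
  have "br (br X Y) c + br (br Y c) X + br (br c X) Y = 0" using L lr_jac by blast
  moreover have "br (br Y c) X = - br X (br Y c)" using L lr_anti by blast
  moreover have "br (br c X) Y = - br (br X c) Y" using L lr_anti[of br c X] lr_neg1 by metis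
  ultimately show ?thesis by (simp add: algebra_simps eq_neg_iff_add_eq_0)
qed

lemma foldl_add: "lie_ring br \<Longrightarrow> foldl br (x + y) zs = foldl br x zs + foldl br y zs"
  by (induction zs arbitrary: x y) (auto simp: lr_add1)
lemma foldl_zero: "lie_ring br \<Longrightarrow> foldl br 0 zs = 0"
  by (induction zs) (auto simp: lr_zero1)
lemma foldl_neg: "lie_ring br \<Longrightarrow> foldl br (- x) zs = - foldl br x zs"
  by (induction zs arbitrary: x) (auto simp: lr_neg1)
lemma foldl_sum: "lie_ring br \<Longrightarrow> foldl br (\<Sum>x\<in>A. f x) zs = (\<Sum>x\<in>A. foldl br (f x) zs)"
  using sum_comp_morphism[of "\<lambda>x. foldl br x zs" f A] by (simp add: foldl_add foldl_zero o_def)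
lemma br_sum: "lie_ring br \<Longrightarrow> br (\<Sum>x\<in>A. f x) c = (\<Sum>x\<in>A. br (f x) c)"
  using foldl_sum[of br f A "[c]"] by simp

definition sg :: "nat set \<Rightarrow> 'a::ab_group_add \<Rightarrow> 'a" where
  "sg B x = (if even (card B) then x else - x)"

definition wd :: "nat set \<Rightarrow> nat \<Rightarrow> nat list" where
  "wd B q = rev (sorted_list_of_set B) @ sorted_list_of_set ({1..q} - B)"

lemma sorted_insert_max:
  assumes "finite A" "\<forall>x\<in>A. x < m"
  shows "sorted_list_of_set (insert m A) = sorted_list_of_set A @ [m]"
proof -
  have "sorted_wrt (<) (sorted_list_of_set A @ [m])"
    using assms by (simp add: sorted_wrt_append)
  then show ?thesis using assms
    by (subst sorted_list_of_set_unique[symmetric]) (auto simp: card_insert_if)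
qed

lemma wd_step1:
  assumes "B \<subseteq> {2..q}"
  shows "wd B (Suc q) = wd B q @ [Suc q]"
proof -
  have "{1..Suc q} - B = insert (Suc q) ({1..q} - B)" using assms by auto
  then show ?thesis unfolding wd_def using sorted_insert_max[of "{1..q} - B" "Suc q"] by auto
qed

lemma wd_step2:
  assumes "B \<subseteq> {2..q}"
  shows "wd (insert (Suc q) B) (Suc q) = Suc q # wd B q"
proof -
  have "{1..Suc q} - insert (Suc q) B = {1..q} - B" using assms by auto
  moreover have "finite B" using assms finite_subset by blast
  moreover have "sorted_list_of_set (insert (Suc q) B) = sorted_list_of_set B @ [Suc q]"
    by (rule sorted_insert_max) (use assms \<open>finite B\<close> in auto)
  ultimately show ?thesis unfolding wd_def by simp
qed

lemma Pow_step: "1 \<le> q \<Longrightarrow> Pow {2..Suc q} = Pow {2..q} \<union> insert (Suc q) ` Pow {2..q}"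
proof -
  assume "1 \<le> q"
  then have "{2..Suc q} = insert (Suc q) {2..q}" by auto
  then show ?thesis by (simp add: Pow_insert)
qed

lemma expand:
  assumes L: "lie_ring br" and q: "1 \<le> q"
  shows "br X (foldl br (b 1) (map b [2..<q+1])) =
    (\<Sum>B\<in>Pow {2..q}. sg B (foldl br X (map b (wd B q))))"
  using q
proof (induction q arbitrary: X rule: dec_induct)
  case base
  have "wd {} 1 = [1]" by (simp add: wd_def)
  then show ?case by (simp add: sg_def)
next
  case (step q)
  define Y where "Y = foldl br (b 1) (map b [2..<q+1])"
  have Y: "foldl br (b 1) (map b [2..<Suc q+1]) = br Y (b (Suc q))"
    using step.hyps by (simp add: Y_def)
  have fin: "finite (Pow {2..q})" by simp
  have disj: "Pow {2..q} \<inter> insert (Suc q) ` Pow {2..q} = {}" by auto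
  have inj: "inj_on (insert (Suc q)) (Pow {2..q})"
    by (rule inj_onI) (metis PowD atLeastAtMost_iff insert_ident not_less_eq_eq order_refl subset_iff)
  have c1: "card (insert (Suc q) B) = Suc (card B)" if "B \<in> Pow {2..q}" for B
    using that by (subst card_insert_disjoint) (auto intro: finite_subset)
  have "(\<Sum>B\<in>Pow {2..Suc q}. sg B (foldl br X (map b (wd B (Suc q))))) =
     (\<Sum>B\<in>Pow {2..q}. sg B (foldl br X (map b (wd B (Suc q))))) +
     (\<Sum>B\<in>insert (Suc q) ` Pow {2..q}. sg B (foldl br X (map b (wd B (Suc q)))))"
    unfolding Pow_step[OF step.hyps(1)] by (rule sum.union_disjoint) (use disj in auto)
  also have "(\<Sum>B\<in>Pow {2..q}. sg B (foldl br X (map b (wd B (Suc q))))) =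
      (\<Sum>B\<in>Pow {2..q}. br (sg B (foldl br X (map b (wd B q)))) (b (Suc q)))"
    by (rule sum.cong) (auto simp: wd_step1 sg_def lr_neg1[OF L])
  also have "\<dots> = br (br X Y) (b (Suc q))"
    using step.IH[of X] by (simp add: br_sum[OF L] Y_def)
  also have "(\<Sum>B\<in>insert (Suc q) ` Pow {2..q}. sg B (foldl br X (map b (wd B (Suc q))))) =
     (\<Sum>B\<in>Pow {2..q}. sg (insert (Suc q) B) (foldl br X (map b (wd (insert (Suc q) B) (Suc q)))))"
    by (rule sum.reindex[OF inj, unfolded o_def])
  also have "\<dots> = (\<Sum>B\<in>Pow {2..q}. - sg B (foldl br (br X (b (Suc q))) (map b (wd B q))))"
    by (rule sum.cong) (auto simp: wd_step2 sg_def c1)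
  also have "\<dots> = - br (br X (b (Suc q))) Y"
    using step.IH[of "br X (b (Suc q))"] by (simp add: sum_negf Y_def)
  finally show ?case using Y lr_jac2[OF L, of X Y "b (Suc q)"] by simp
qed



lemma fin_B: "B \<subseteq> {2..(q::nat)} \<Longrightarrow> finite B" using finite_subset by blast

lemma card_B: "B \<subseteq> {2..(q::nat)} \<Longrightarrow> card B \<le> q - 1"
  using card_mono[of "{2..q}" B] by auto

lemma card_compl: "B \<subseteq> {2..(q::nat)} \<Longrightarrow> card ({1..q} - B) = q - card B"
  by (subst card_Diff_subset) (auto intro: fin_B)

lemma wd_length: "B \<subseteq> {2..q} \<Longrightarrow> length (wd B q) = q"
  using card_compl[of B q] card_B[of B q] fin_B[of B q] by (simp add: wd_def)

lemma wd_set: "B \<subseteq> {2..q} \<Longrightarrow> set (wd B q) = {1..q}"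
  using fin_B[of B q] by (auto simp: wd_def)

lemma wd_distinct: "B \<subseteq> {2..q} \<Longrightarrow> distinct (wd B q)"
  using fin_B[of B q] by (auto simp: wd_def)

lemma wd_nth1: "finite B \<Longrightarrow> j < card B \<Longrightarrow> wd B q ! j = sorted_list_of_set B ! (card B - Suc j)"
  by (simp add: wd_def nth_append rev_nth)

lemma wd_nth2: "finite B \<Longrightarrow> card B \<le> j \<Longrightarrow> wd B q ! j = sorted_list_of_set ({1..q} - B) ! (j - card B)"
  by (simp add: wd_def nth_append)

lemma wd_nth1_in: "finite B \<Longrightarrow> j < card B \<Longrightarrow> wd B q ! j \<in> B"
  by (simp add: wd_def nth_append) (metis length_rev length_sorted_list_of_set nth_mem set_rev set_sorted_list_of_set)

lemma compl_hd: assumes "B \<subseteq> {2..(q::nat)}" "1 \<le> q"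
  shows "sorted_list_of_set ({1..q} - B) ! 0 = 1"
proof -
  have one: "1 \<in> {1..q} - B" using assms by auto
  then have ne: "{1..q} - B \<noteq> {}" by blast
  have "Min ({1..q} - B) = 1" using assms by (intro Min_eqI) auto
  then show ?thesis using sorted_list_of_set_nonempty[OF _ ne] by simp
qed

lemma wd_at_card: "B \<subseteq> {2..q} \<Longrightarrow> 1 \<le> q \<Longrightarrow> wd B q ! card B = 1"
  using wd_nth2[of B "card B" q] compl_hd[of B q] fin_B[of B q] by simp

definition gt :: "nat \<Rightarrow> nat \<Rightarrow> nat set \<Rightarrow> nat \<Rightarrow> nat" where
  "gt p q B j = (if 1 \<le> j \<and> j \<le> p then j else if p + 1 \<le> j \<and> j \<le> p + q then p + wd B q ! (j - p - 1) else j)"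

definition gperm :: "nat \<Rightarrow> nat \<Rightarrow> nat set \<Rightarrow> nat \<Rightarrow> nat" where
  "gperm p q B = gt p q B \<circ> (transpose (1::nat) 2 ^^ card B)"

lemma tpow: "(transpose (1::nat) 2 ^^ i) = (if even i then id else transpose 1 2)"
  by (induction i) auto


lemma tilde_eq:
  assumes B: "B \<subseteq> {2..q}"
    and be: "\<forall>j\<in>{1..card B}. \<beta> j = sorted_list_of_set B ! (j - 1)"
    and al: "\<forall>j\<in>{1..q - card B}. \<alpha> j = sorted_list_of_set ({1..q} - B) ! (j - 1)"
  shows "sigma_tilde \<alpha> \<beta> p q (card B) = gt p q B"
proof
  fix j
  define i where "i = card B"
  have fin: "finite B" using fin_B[OF B] .
  have iq: "i \<le> q" using card_B[OF B] by (simp add: i_def)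
  show "sigma_tilde \<alpha> \<beta> p q (card B) j = gt p q B j"
  proof (cases "p + 1 \<le> j \<and> j \<le> p + i")
    case True
    define m where "m = j - p - 1"
    have m: "m < i" "i + 1 - (j - p) = i - m" using True by (auto simp: m_def)
    have "\<beta> (i - m) = sorted_list_of_set B ! (i - Suc m)"
      using be m by (auto simp: i_def)
    moreover have "wd B q ! m = sorted_list_of_set B ! (i - Suc m)"
      using wd_nth1[OF fin, of m q] m by (simp add: i_def)
    ultimately show ?thesis using True iq m
      unfolding sigma_tilde_def gt_def i_def[symmetric] m_def by auto
  next
    case F: False
    show ?thesis
    proof (cases "p + i + 1 \<le> j \<and> j \<le> p + q")
      case True
      define m where "m = j - p - 1"
      have m: "i \<le> m" "j - p - i = m - i + 1" "m - i + 1 \<le> q - i" using True by (auto simp: m_def)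
      have "\<alpha> (m - i + 1) = sorted_list_of_set ({1..q} - B) ! (m - i)"
        using al m by (auto simp: i_def)
      moreover have "wd B q ! m = sorted_list_of_set ({1..q} - B) ! (m - i)"
        using wd_nth2[OF fin, of m q] m by (simp add: i_def)
      ultimately show ?thesis using True F iq m
        unfolding sigma_tilde_def gt_def i_def[symmetric] m_def by auto
    next
      case False
      then show ?thesis using F iq unfolding sigma_tilde_def gt_def i_def[symmetric] by auto
    qed
  qed
qed



lemma smono_sorted:
  assumes "strict_mono_on {1..t} (f::nat \<Rightarrow> nat)"
  shows "sorted_list_of_set (f ` {1..t}) = map f [1..<t+1]"
proof -
  have inj: "inj_on f {1..t}" using strict_mono_on_imp_inj_on[OF assms] .
  have "sorted_wrt (<) (map f [1..<t+1])"
    unfolding sorted_wrt_iff_nth_less by (auto simp del: upt_Suc intro!: strict_mono_onD[OF assms])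
  moreover have "card (f ` {1..t}) = t" using card_image[OF inj] by simp
  ultimately show ?thesis
    by (subst sorted_list_of_set_unique[symmetric]) auto
qed

lemma smono_nth:
  assumes "strict_mono_on {1..t} (f::nat \<Rightarrow> nat)" "j \<in> {1..t}"
  shows "f j = sorted_list_of_set (f ` {1..t}) ! (j - 1)"
proof -
  have j: "j - 1 < t" "1 + (j - 1) = j" using assms(2) by auto
  have "map f [1..<t+1] ! (j-1) = f ([1..<t+1] ! (j-1))" by (rule nth_map) (use j in simp)
  also have "[1..<t+1] ! (j-1) = 1 + (j - 1)" by (rule nth_upt) (use j in simp)
  finally show ?thesis unfolding smono_sorted[OF assms(1)] using j by simp
qed

lemma sorted_nth_smono:
  assumes "finite A"
  shows "strict_mono_on {1..card A} (\<lambda>j. sorted_list_of_set A ! (j - 1))"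
proof (rule strict_mono_onI)
  fix r s assume "r \<in> {1..card A}" "s \<in> {1..card A}" "r < s"
  then show "sorted_list_of_set A ! (r - 1) < sorted_list_of_set A ! (s - 1)"
    using sorted_wrt_nth_less[OF strict_sorted_list_of_set[of A], of "r - 1" "s - 1"] assms by auto
qed

lemma sorted_nth_in:
  assumes "finite A" "j \<in> {1..card A}"
  shows "sorted_list_of_set A ! (j - 1) \<in> A"
proof -
  have "j - 1 < length (sorted_list_of_set A)" using assms by auto
  then have "sorted_list_of_set A ! (j - 1) \<in> set (sorted_list_of_set A)" by (rule nth_mem)
  then show ?thesis using assms by simp
qed

lemma C_char:
  assumes p: "1 \<le> p" and q: "1 \<le> q"
  shows "C_set p q = gperm p q ` Pow {2..q}"
proof
  show "C_set p q \<subseteq> gperm p q ` Pow {2..q}"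
  proof
    fix \<sigma> assume "\<sigma> \<in> C_set p q"
    then obtain i \<alpha> \<beta> where s: "\<sigma> = sigma_perm \<alpha> \<beta> p q i" and i: "i \<le> q - 1"
      and sh: "(\<alpha>, \<beta>) \<in> shuffle1 (q - i) i" unfolding C_set_def by blast
    have qi: "q - i + i = q" using i q by simp
    have am: "strict_mono_on {1..q-i} \<alpha>" and bm: "strict_mono_on {1..i} \<beta>"
      and ai: "\<alpha> ` {1..q-i} \<subseteq> {1..q}" and bi: "\<beta> ` {1..i} \<subseteq> {1..q}"
      and dj: "\<alpha> ` {1..q-i} \<inter> \<beta> ` {1..i} = {}" and a1: "\<alpha> 1 = 1"
      using sh qi unfolding shuffle1_def by auto
    define B where "B = \<beta> ` {1..i}"
    have cB: "card B = i" using card_image[OF strict_mono_on_imp_inj_on[OF bm]] by (simp add: B_def)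
    have cA: "card (\<alpha> ` {1..q-i}) = q - i" using card_image[OF strict_mono_on_imp_inj_on[OF am]] by simp
    have "1 \<in> {1..q-i}" using i q by auto
    then have "\<alpha> 1 \<in> \<alpha> ` {1..q-i}" by (rule imageI)
    then have "1 \<in> \<alpha> ` {1..q-i}" using a1 by simp
    then have "1 \<notin> B" using dj B_def by blast
    have B2: "B \<subseteq> {2..q}"
    proof
      fix x assume "x \<in> B"
      then have "x \<in> {1..q}" using bi B_def by auto
      moreover have "x \<noteq> 1" using \<open>x \<in> B\<close> \<open>1 \<notin> B\<close> by blast
      ultimately show "x \<in> {2..q}" by auto
    qed
    have un: "\<alpha> ` {1..q-i} \<union> B = {1..q}"
    proof (rule card_subset_eq)
      show "finite {1..q}" by simp
      show "\<alpha> ` {1..q-i} \<union> B \<subseteq> {1..q}" using ai bi B_def by auto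
      have "card (\<alpha> ` {1..q-i} \<union> B) = card (\<alpha> ` {1..q-i}) + card B"
        by (rule card_Un_disjoint) (use dj fin_B[OF B2] in \<open>auto simp: B_def\<close>)
      then show "card (\<alpha> ` {1..q-i} \<union> B) = card {1..q}" using cA cB qi by simp
    qed
    have cmp: "{1..q} - B = \<alpha> ` {1..q-i}" using un dj unfolding B_def by blast
    have "sigma_tilde \<alpha> \<beta> p q (card B) = gt p q B"
    proof (rule tilde_eq[OF B2])
      show "\<forall>j\<in>{1..card B}. \<beta> j = sorted_list_of_set B ! (j - 1)"
      proof
        fix j assume "j \<in> {1..card B}"
        then show "\<beta> j = sorted_list_of_set B ! (j - 1)" using smono_nth[OF bm, of j] cB unfolding B_def by simp
      qed
      show "\<forall>j\<in>{1..q - card B}. \<alpha> j = sorted_list_of_set ({1..q} - B) ! (j - 1)"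
      proof
        fix j assume "j \<in> {1..q - card B}"
        then show "\<alpha> j = sorted_list_of_set ({1..q} - B) ! (j - 1)" using smono_nth[OF am, of j] cB unfolding cmp by simp
      qed
    qed
    then have "\<sigma> = gperm p q B" using s cB by (simp add: sigma_perm_def gperm_def)
    then show "\<sigma> \<in> gperm p q ` Pow {2..q}" using B2 by blast
  qed
next
  show "gperm p q ` Pow {2..q} \<subseteq> C_set p q"
  proof
    fix \<sigma> assume "\<sigma> \<in> gperm p q ` Pow {2..q}"
    then obtain B where B2: "B \<subseteq> {2..q}" and s: "\<sigma> = gperm p q B" by blast
    define i where "i = card B"
    define \<alpha> where "\<alpha> = (\<lambda>j. sorted_list_of_set ({1..q} - B) ! (j - 1))"
    define \<beta> where "\<beta> = (\<lambda>j. sorted_list_of_set B ! (j - 1))"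
    have fin: "finite B" using fin_B[OF B2] .
    have i: "i \<le> q - 1" using card_B[OF B2] by (simp add: i_def)
    have qi: "q - i + i = q" using i q by simp
    have cc: "card ({1..q} - B) = q - i" using card_compl[OF B2] by (simp add: i_def)
    have ain: "\<alpha> j \<in> {1..q} - B" if "j \<in> {1..q-i}" for j
      using sorted_nth_in[of "{1..q} - B" j] cc that by (simp add: \<alpha>_def)
    have bin: "\<beta> j \<in> B" if "j \<in> {1..i}" for j
      using sorted_nth_in[OF fin, of j] that by (simp add: \<beta>_def i_def)
    have sh: "(\<alpha>, \<beta>) \<in> shuffle1 (q - i) i"
      unfolding shuffle1_def
    proof (clarsimp simp only: qi, intro conjI)
      show "strict_mono_on {1..q - i} \<alpha>" using sorted_nth_smono[of "{1..q} - B"] cc by (simp add: \<alpha>_def)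
      show "strict_mono_on {1..i} \<beta>" using sorted_nth_smono[OF fin] by (simp add: \<beta>_def i_def)
      show "\<alpha> ` {1..q - i} \<subseteq> {1..q}" using ain by blast
      show "\<beta> ` {1..i} \<subseteq> {1..q}" using bin B2 by fastforce
      show "\<alpha> ` {1..q - i} \<inter> \<beta> ` {1..i} = {}"
        unfolding disjoint_iff by (metis DiffD2 imageE ain bin)
      show "\<alpha> 1 = 1" using compl_hd[OF B2 q] by (simp add: \<alpha>_def)
    qed
    have "sigma_tilde \<alpha> \<beta> p q i = gt p q B"
      unfolding i_def by (rule tilde_eq[OF B2]) (auto simp: \<alpha>_def \<beta>_def)
    then have "\<sigma> = sigma_perm \<alpha> \<beta> p q i" by (simp add: s gperm_def sigma_perm_def i_def)
    then show "\<sigma> \<in> C_set p q" using i sh unfolding C_set_def by blast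
  qed
qed



lemma gperm_app: "gperm p q B x = gt p q B (if even (card B) then x else transpose 1 2 x)"
  unfolding gperm_def tpow by simp

lemma gt_1: "1 \<le> p \<Longrightarrow> gt p q B 1 = 1" by (simp add: gt_def)
lemma gt_2: "2 \<le> p \<Longrightarrow> gt p q B 2 = 2" by (simp add: gt_def)

lemma gt_mid: "p + 1 \<le> j \<Longrightarrow> j \<le> p + q \<Longrightarrow> gt p q B j = p + wd B q ! (j - p - 1)"
  by (simp add: gt_def)

lemma wd_nth_range: "B \<subseteq> {2..q} \<Longrightarrow> m < q \<Longrightarrow> wd B q ! m \<in> {1..q}"
  using nth_mem[of m "wd B q"] wd_length[of B q] wd_set[of B q] by simp

lemma gt_ge2: assumes "1 \<le> p" "B \<subseteq> {2..q}" "2 \<le> j" shows "2 \<le> gt p q B j"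
proof (cases "p + 1 \<le> j \<and> j \<le> p + q")
  case True
  then have "wd B q ! (j - p - 1) \<in> {1..q}" using wd_nth_range[OF assms(2)] by auto
  then show ?thesis using True assms gt_mid[of p j q B] by auto
next
  case False then show ?thesis using assms by (auto simp: gt_def)
qed

lemma gt_2_p1: assumes "B \<subseteq> {2..q}" "B \<noteq> {}" shows "3 \<le> gt 1 q B 2"
proof -
  have fin: "finite B" using fin_B[OF assms(1)] .
  have "0 < card B" using fin assms(2) by auto
  then have "wd B q ! 0 \<in> B" using wd_nth1_in[OF fin] by blast
  then have "2 \<le> wd B q ! 0" using assms(1) by auto
  moreover have "1 \<le> q" using assms by auto
  ultimately show ?thesis using gt_mid[of 1 2 q B] by simp
qed

lemma gt_eq_wd:
  assumes "1 \<le> p" "B1 \<subseteq> {2..q}" "B2 \<subseteq> {2..q}" "gt p q B1 = gt p q B2"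
  shows "wd B1 q = wd B2 q"
proof (rule nth_equalityI)
  show "length (wd B1 q) = length (wd B2 q)" using wd_length assms by metis
  fix m assume "m < length (wd B1 q)"
  then have m: "m < q" using wd_length assms by metis
  have "gt p q B1 (p + 1 + m) = gt p q B2 (p + 1 + m)" using assms by simp
  then show "wd B1 q ! m = wd B2 q ! m" using m gt_mid[of p "p+1+m" q] by simp
qed

lemma wd_inj:
  assumes "B1 \<subseteq> {2..q}" "B2 \<subseteq> {2..q}" "1 \<le> q" "wd B1 q = wd B2 q"
  shows "B1 = B2"
proof -
  have f1: "finite B1" "finite B2" using fin_B assms by blast+
  have c: "card B1 = card B2"
  proof (rule ccontr)
    assume "card B1 \<noteq> card B2"
    then consider "card B1 < card B2" | "card B2 < card B1" by linarith
    then show False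
    proof cases
      case 1
      have "wd B2 q ! card B1 \<in> B2" using wd_nth1_in[OF f1(2) 1] .
      moreover have "wd B1 q ! card B1 = 1" using wd_at_card assms by blast
      ultimately show False using assms by auto
    next
      case 2
      have "wd B1 q ! card B2 \<in> B1" using wd_nth1_in[OF f1(1) 2] .
      moreover have "wd B2 q ! card B2 = 1" using wd_at_card assms by blast
      ultimately show False using assms by auto
    qed
  qed
  have "set (take (card B) (wd B q)) = B" if "finite B" for B
    using that by (simp add: wd_def)
  then show ?thesis using f1 c assms(4) by metis
qed

lemma gperm_inj:
  assumes p: "1 \<le> p" and q: "1 \<le> q"
  shows "inj_on (gperm p q) (Pow {2..q})"
proof (rule inj_onI)
  fix B1 B2 assume B1: "B1 \<in> Pow {2..q}" and B2: "B2 \<in> Pow {2..q}" and eq: "gperm p q B1 = gperm p q B2"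
  have s1: "B1 \<subseteq> {2..q}" "B2 \<subseteq> {2..q}" using B1 B2 by auto
  have par: "even (card B1) = even (card B2)"
  proof (rule ccontr)
    have key: "\<not> (even (card C1) \<and> odd (card C2) \<and> gperm p q C1 = gperm p q C2)"
      if "C1 \<subseteq> {2..q}" "C2 \<subseteq> {2..q}" for C1 C2
    proof
      assume h: "even (card C1) \<and> odd (card C2) \<and> gperm p q C1 = gperm p q C2"
      have e1: "even (card C1)" and o2: "odd (card C2)" using h by auto
      have "gperm p q C1 1 = 1" using e1 p by (simp add: gperm_app gt_def)
      moreover have "gperm p q C2 1 = gt p q C2 2" using o2 by (simp add: gperm_app)
      moreover have "2 \<le> gt p q C2 2" using gt_ge2[OF p that(2)] by simp
      ultimately show False using h by simp
    qed
    assume "even (card B1) \<noteq> even (card B2)"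
    then show False using key[OF s1(1) s1(2)] key[OF s1(2) s1(1)] eq by auto
  qed
  have "gt p q B1 = gt p q B2"
  proof
    fix x
    have "gperm p q B1 (if even (card B1) then x else transpose 1 2 x) = gperm p q B2 (if even (card B1) then x else transpose 1 2 x)"
      using eq by simp
    then show "gt p q B1 x = gt p q B2 x" using par by (auto simp: gperm_app split: if_splits)
  qed
  then have "wd B1 q = wd B2 q" using gt_eq_wd[OF p s1] by blast
  then show "B1 = B2" using wd_inj[OF s1 q] by blast
qed

lemma gt_permutes:
  assumes p: "1 \<le> p" and B: "B \<subseteq> {2..q}"
  shows "gt p q B permutes {1..p+q}"
proof (rule bij_imp_permutes)
  let ?w = "wd B q"
  have len: "length ?w = q" and ds: "distinct ?w" using wd_length[OF B] wd_distinct[OF B] by auto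
  have img: "gt p q B ` {1..p+q} \<subseteq> {1..p+q}"
  proof
    fix y assume "y \<in> gt p q B ` {1..p+q}"
    then obtain j where j: "j \<in> {1..p+q}" and y: "y = gt p q B j" by blast
    show "y \<in> {1..p+q}"
    proof (cases "j \<le> p")
      case True then show ?thesis using j y by (simp add: gt_def)
    next
      case False
      then have "?w ! (j - p - 1) \<in> {1..q}" using wd_nth_range[OF B] j by auto
      then show ?thesis using False j y gt_mid[of p j q B] by auto
    qed
  qed
  have inj: "inj_on (gt p q B) {1..p+q}"
  proof (rule inj_onI)
    fix x y assume x: "x \<in> {1..p+q}" and y: "y \<in> {1..p+q}" and e: "gt p q B x = gt p q B y"
    show "x = y"
    proof (cases "x \<le> p")
      case True
      show ?thesis
      proof (cases "y \<le> p")
        case True then show ?thesis using \<open>x \<le> p\<close> x y e by (simp add: gt_def)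
      next
        case False
        then have "gt p q B y = p + ?w ! (y - p - 1)" using y gt_mid[of p y q B] by auto
        moreover have "?w ! (y - p - 1) \<in> {1..q}" using wd_nth_range[OF B] y False by auto
        ultimately show ?thesis using \<open>x \<le> p\<close> x e by (simp add: gt_def)
      qed
    next
      case False
      show ?thesis
      proof (cases "y \<le> p")
        case True
        have "gt p q B x = p + ?w ! (x - p - 1)" using x gt_mid[of p x q B] False by auto
        moreover have "?w ! (x - p - 1) \<in> {1..q}" using wd_nth_range[OF B] x False by auto
        ultimately show ?thesis using True y e by (simp add: gt_def)
      next
        case F2: False
        have "p + ?w ! (x - p - 1) = p + ?w ! (y - p - 1)"
          using e gt_mid[of p x q B] gt_mid[of p y q B] x y False F2 by auto
        then have "?w ! (x - p - 1) = ?w ! (y - p - 1)" by simp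
        then have "x - p - 1 = y - p - 1" using nth_eq_iff_index_eq[OF ds] len x y False F2 by auto
        then show ?thesis using False F2 by auto
      qed
    qed
  qed
  have "gt p q B ` {1..p+q} = {1..p+q}" using endo_inj_surj[OF _ img inj] by simp
  then show "bij_betw (gt p q B) {1..p+q} {1..p+q}" using inj by (simp add: bij_betw_def)
  show "\<And>x. x \<notin> {1..p+q} \<Longrightarrow> gt p q B x = x" by (auto simp: gt_def)
qed

lemma gperm_permutes:
  assumes p: "1 \<le> p" and q: "1 \<le> q" and B: "B \<subseteq> {2..q}"
  shows "gperm p q B permutes {1..p+q}"
proof -
  have t: "transpose (1::nat) 2 permutes {1..p+q}" using p q by (intro permutes_swap_id) auto
  have "(transpose (1::nat) 2 ^^ card B) permutes {1..p+q}"
    unfolding tpow using t permutes_id by simp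
  then show ?thesis unfolding gperm_def using gt_permutes[OF p B] permutes_compose by blast
qed



lemma upt_split3: "i \<le> j \<Longrightarrow> j \<le> k \<Longrightarrow> [i..<k] = [i..<j] @ [j..<k]"
  using upt_add_eq_append[of i j "k - j"] by simp

lemma pb_swap:
  assumes L: "lie_ring br" and n: "2 \<le> n"
  shows "perm_bracket br n a (\<sigma> \<circ> transpose 1 2) = - perm_bracket br n a \<sigma>"
proof -
  have a1: "[1..<n+1] = 1 # [Suc 1..<n+1]" by (rule upt_conv_Cons) (use n in simp)
  have a2: "[Suc 1..<n+1] = Suc 1 # [Suc (Suc 1)..<n+1]" by (rule upt_conv_Cons) (use n in simp)
  have u: "[1..<n+1] = 1 # 2 # [3..<n+1]" using a1 a2 by (simp del: upt_Suc add: numeral_3_eq_3)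
  have m: "map (\<lambda>j. a (\<sigma> (transpose 1 2 j))) [3..<n+1] = map (\<lambda>j. a (\<sigma> j)) [3..<n+1]"
    by (rule map_cong) (auto simp del: upt_Suc simp: transpose_apply_other)
  have "perm_bracket br n a (\<sigma> \<circ> transpose 1 2) =
      foldl br (br (a (\<sigma> 2)) (a (\<sigma> 1))) (map (\<lambda>j. a (\<sigma> (transpose 1 2 j))) [3..<n+1])"
    unfolding perm_bracket_def u by (simp del: upt_Suc)
  also have "\<dots> = foldl br (br (a (\<sigma> 2)) (a (\<sigma> 1))) (map (\<lambda>j. a (\<sigma> j)) [3..<n+1])"
    by (simp only: m)
  also have "\<dots> = - foldl br (br (a (\<sigma> 1)) (a (\<sigma> 2))) (map (\<lambda>j. a (\<sigma> j)) [3..<n+1])"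
    using lr_anti[OF L] foldl_neg[OF L] by metis
  also have "\<dots> = - perm_bracket br n a \<sigma>"
    unfolding perm_bracket_def u by (simp del: upt_Suc)
  finally show ?thesis .
qed

lemma pb_gt:
  assumes p: "1 \<le> p" and B: "B \<subseteq> {2..q}" and n: "p + q \<le> n"
  shows "perm_bracket br n a (gt p q B) =
    foldl br (foldl br (foldl br (a 1) (map a [2..<p+1])) (map (\<lambda>x. a (p+x)) (wd B q))) (map a [p+q+1..<n+1])"
proof -
  have u1: "[1..<n+1] = [1..<p+1] @ [p+1..<n+1]" by (rule upt_split3) (use p n in auto)
  have u2: "[p+1..<n+1] = [p+1..<p+q+1] @ [p+q+1..<n+1]" by (rule upt_split3) (use n in auto)
  have u: "[1..<n+1] = [1..<p+1] @ [p+1..<p+q+1] @ [p+q+1..<n+1]"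
    by (simp only: u1 u2)
  have e: "[1..<p+1] = 1 # [2..<p+1]" using upt_conv_Cons[of 1 "p+1"] p by (simp del: upt_Suc add: numeral_2_eq_2)
  have e2: "map (\<lambda>j. a (gt p q B j)) [2..<p+1] = map a [2..<p+1]"
    by (rule map_cong) (auto simp del: upt_Suc simp: gt_def)
  have m1: "map (\<lambda>j. a (gt p q B j)) [1..<p+1] = a 1 # map a [2..<p+1]"
    unfolding e list.map e2 using p by (simp del: upt_Suc add: gt_def)
  have m2: "map (\<lambda>j. a (gt p q B j)) [p+1..<p+q+1] = map (\<lambda>x. a (p+x)) (wd B q)"
  proof (rule nth_equalityI)
    show "length (map (\<lambda>j. a (gt p q B j)) [p+1..<p+q+1]) = length (map (\<lambda>x. a (p+x)) (wd B q))"
      using wd_length[OF B] by (simp del: upt_Suc)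
    fix i assume "i < length (map (\<lambda>j. a (gt p q B j)) [p+1..<p+q+1])"
    then have i: "i < q" by (simp del: upt_Suc)
    then show "map (\<lambda>j. a (gt p q B j)) [p+1..<p+q+1] ! i = map (\<lambda>x. a (p+x)) (wd B q) ! i"
      using wd_length[OF B] gt_mid[of p "p+1+i" q B] by (simp del: upt_Suc add: add.commute add.left_commute)
  qed
  have m3: "map (\<lambda>j. a (gt p q B j)) [p+q+1..<n+1] = map a [p+q+1..<n+1]"
    by (rule map_cong) (auto simp del: upt_Suc simp: gt_def)
  show ?thesis unfolding perm_bracket_def u map_append m1 m2 m3 by (simp del: upt_Suc)
qed

lemma pb_gperm:
  assumes L: "lie_ring br" and p: "1 \<le> p" and q: "1 \<le> q" and B: "B \<subseteq> {2..q}" and n: "p + q \<le> n"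
  shows "perm_bracket br n a (gperm p q B) =
    sg B (foldl br (foldl br (foldl br (a 1) (map a [2..<p+1])) (map (\<lambda>x. a (p+x)) (wd B q))) (map a [p+q+1..<n+1]))"
proof (cases "even (card B)")
  case True
  then have "gperm p q B = gt p q B" unfolding gperm_def tpow by simp
  then show ?thesis using True pb_gt[OF p B n] by (simp del: upt_Suc add: sg_def)
next
  case False
  then have "gperm p q B = gt p q B \<circ> transpose 1 2" unfolding gperm_def tpow by simp
  then show ?thesis using False pb_gt[OF p B n] pb_swap[OF L, of n a "gt p q B"] n p q by (simp del: upt_Suc add: sg_def)
qed

lemma map_shift: "map (\<lambda>x. a (p + x)) [2..<q+1] = map a [p+2..<p+q+1]"
  by (rule nth_equalityI) (auto simp del: upt_Suc simp: add.commute add.left_commute)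

lemma C_sum:
  assumes L: "lie_ring br" and p: "1 \<le> p" and q: "1 \<le> q" and n: "p + q \<le> n"
  shows "(\<Sum>\<sigma>\<in>C_set p q. perm_bracket br n a \<sigma>) =
    foldl br (br (foldl br (a 1) (map a [2..<p+1])) (foldl br (a (p+1)) (map a [p+2..<p+q+1]))) (map a [p+q+1..<n+1])"
proof -
  define X where "X = foldl br (a 1) (map a [2..<p+1])"
  define R where "R = map a [p+q+1..<n+1]"
  define b where "b = (\<lambda>x. a (p + x))"
  have "(\<Sum>\<sigma>\<in>C_set p q. perm_bracket br n a \<sigma>) = (\<Sum>B\<in>Pow {2..q}. perm_bracket br n a (gperm p q B))"
    unfolding C_char[OF p q] by (rule sum.reindex[OF gperm_inj[OF p q], unfolded o_def])
  also have "\<dots> = (\<Sum>B\<in>Pow {2..q}. foldl br (sg B (foldl br X (map b (wd B q)))) R)"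
    by (rule sum.cong) (auto simp: pb_gperm[OF L p q _ n] sg_def foldl_neg[OF L] X_def R_def b_def)
  also have "\<dots> = foldl br (\<Sum>B\<in>Pow {2..q}. sg B (foldl br X (map b (wd B q)))) R"
    by (rule foldl_sum[OF L, symmetric])
  also have "\<dots> = foldl br (br X (foldl br (b 1) (map b [2..<q+1]))) R"
    using expand[OF L q, of X b] by simp
  finally show ?thesis using map_shift[of a p q] by (simp add: X_def R_def b_def)
qed



lemma Phi_inj: "inj (Phi k l)"
  by (rule injI) (auto simp: Phi_def split: if_splits)

lemma Phi_permutes: assumes "1 \<le> k" "1 \<le> l" shows "Phi k l permutes {1..k+l}"
proof (rule bij_imp_permutes)
  have img: "Phi k l ` {1..k+l} \<subseteq> {1..k+l}" by (auto simp: Phi_def)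
  have inj: "inj_on (Phi k l) {1..k+l}" using Phi_inj inj_on_subset by blast
  have "Phi k l ` {1..k+l} = {1..k+l}" using endo_inj_surj[OF _ img inj] by simp
  then show "bij_betw (Phi k l) {1..k+l} {1..k+l}" using inj by (simp add: bij_betw_def)
  show "\<And>x. x \<notin> {1..k+l} \<Longrightarrow> Phi k l x = x" by (auto simp: Phi_def)
qed

lemma Phi_one: "1 \<le> k \<Longrightarrow> Phi k l y = 1 \<Longrightarrow> y = l + 1"
  by (auto simp: Phi_def split: if_splits)

lemma F1: assumes p: "1 \<le> p" and B: "B \<subseteq> {2..q}"
  shows "gperm p q B 1 = 1 \<or> (gperm p q B 2 = 1 \<and> 2 \<le> q)"
proof (cases "even (card B)")
  case True then show ?thesis using p by (simp add: gperm_app gt_def)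
next
  case False
  then have "B \<noteq> {}" by auto
  then obtain x where "x \<in> B" by blast
  then have "2 \<le> q" using B by auto
  then show ?thesis using False p by (simp add: gperm_app gt_def)
qed

lemma F2: assumes p: "1 \<le> p" and q: "1 \<le> q" and B: "B \<subseteq> {2..q}"
  shows "gperm p q B 1 \<noteq> p + 1"
proof (cases "even (card B)")
  case True then show ?thesis using p by (simp add: gperm_app gt_def)
next
  case False
  then have ne: "B \<noteq> {}" by auto
  have g: "gperm p q B 1 = gt p q B 2" using False by (simp add: gperm_app)
  show ?thesis
  proof (cases "2 \<le> p")
    case True then show ?thesis using g gt_2[OF True] by simp
  next
    case False
    then have "p = 1" using p by simp
    then show ?thesis using g gt_2_p1[OF B ne] by simp
  qed
qed

lemma F3: assumes p: "2 \<le> p"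
  shows "gperm p q B 2 \<noteq> p + 1"
  using p by (cases "even (card B)") (simp_all add: gperm_app gt_def)

lemma C_perm: "1 \<le> p \<Longrightarrow> 1 \<le> q \<Longrightarrow> \<sigma> \<in> C_set p q \<Longrightarrow> \<sigma> permutes {1..p+q}"
  using C_char gperm_permutes by fastforce

lemma T_perm:
  assumes k: "1 \<le> k" and l: "1 \<le> l" and s: "\<sigma> \<in> T_set k l"
  shows "\<sigma> permutes {1..k+l}"
proof -
  have "\<sigma> \<in> C_set k l \<or> (\<exists>\<tau>. \<sigma> = Phi k l \<circ> \<tau> \<and> \<tau> \<in> C_set l k)" using s by (auto simp: T_set_def)
  then show ?thesis
  proof
    assume "\<sigma> \<in> C_set k l" then show ?thesis using C_perm k l by blast
  next
    assume "\<exists>\<tau>. \<sigma> = Phi k l \<circ> \<tau> \<and> \<tau> \<in> C_set l k"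
    then obtain \<tau> where t: "\<sigma> = Phi k l \<circ> \<tau>" "\<tau> \<in> C_set l k" by blast
    have "\<tau> permutes {1..k+l}" using C_perm[OF l k t(2)] by (simp add: add.commute)
    then show ?thesis using t(1) Phi_permutes[OF k l] permutes_compose by blast
  qed
qed

lemma Tn_eq:
  assumes k: "1 \<le> k" and l: "1 \<le> l"
  shows "T_set_n k l n = T_set k l"
proof -
  have "iota (k + l) n \<sigma> = \<sigma>" if "\<sigma> \<in> T_set k l" for \<sigma>
  proof
    fix j show "iota (k + l) n \<sigma> j = \<sigma> j"
      using T_perm[OF k l that] permutes_not_in[of \<sigma> "{1..k+l}" j] by (auto simp: iota_def)
  qed
  then show ?thesis unfolding T_set_n_def by simp
qed

lemma T_split: "T_set k l = C_set k l \<union> (\<lambda>\<tau>. Phi k l \<circ> \<tau>) ` C_set l k"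
  unfolding T_set_def by blast

lemma T_disj:
  assumes k: "1 \<le> k" and l: "1 \<le> l"
  shows "C_set k l \<inter> (\<lambda>\<tau>. Phi k l \<circ> \<tau>) ` C_set l k = {}"
proof (rule ccontr)
  assume "C_set k l \<inter> (\<lambda>\<tau>. Phi k l \<circ> \<tau>) ` C_set l k \<noteq> {}"
  then obtain B B' where B: "B \<subseteq> {2..l}" and B': "B' \<subseteq> {2..k}"
    and eq: "gperm k l B = Phi k l \<circ> gperm l k B'"
    unfolding C_char[OF k l] C_char[OF l k] by auto
  from F1[OF k B] show False
  proof
    assume "gperm k l B 1 = 1"
    then have "Phi k l (gperm l k B' 1) = 1" using eq by (metis comp_apply)
    then have "gperm l k B' 1 = l + 1" using Phi_one[OF k] by blast
    then show False using F2[OF l k B'] by simp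
  next
    assume h: "gperm k l B 2 = 1 \<and> 2 \<le> l"
    then have "Phi k l (gperm l k B' 2) = 1" using eq by (metis comp_apply)
    then have "gperm l k B' 2 = l + 1" using Phi_one[OF k] by blast
    then show False using F3[of l k B'] h by simp
  qed
qed

lemma shiftmap:
  assumes "\<And>i. i < r - m \<Longrightarrow> f (m + i) = g (m' + i)" "r - m = r' - m'"
  shows "map f [m..<r] = map g [m'..<r']"
  using assms by (intro nth_equalityI) (auto simp del: upt_Suc)

theorem main:
  fixes br :: "'a::ab_group_add \<Rightarrow> 'a \<Rightarrow> 'a" and k l n :: nat
  assumes L: "lie_ring br" and k: "1 \<le> k" and l: "1 \<le> l" and n: "k + l \<le> n"
  shows "T_set_n k l n \<subseteq> {\<sigma>. \<sigma> permutes {1..n}} \<and> jacobi_in br n (T_set_n k l n)"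
proof
  show "T_set_n k l n \<subseteq> {\<sigma>. \<sigma> permutes {1..n}}"
    unfolding Tn_eq[OF k l] using T_perm[OF k l] permutes_subset n by fastforce
  show "jacobi_in br n (T_set_n k l n)"
    unfolding jacobi_in_def
  proof
    fix a :: "nat \<Rightarrow> 'a"
    define a' where "a' = (\<lambda>j. a (Phi k l j))"
    define X where "X = foldl br (a 1) (map a [2..<k+1])"
    define Y where "Y = foldl br (a (k+1)) (map a [k+2..<k+l+1])"
    define R where "R = map a [k+l+1..<n+1]"
    have finC: "finite (C_set p q)" if "1 \<le> p" "1 \<le> q" for p q unfolding C_char[OF that] by simp
    have inj: "inj_on (\<lambda>\<tau>. Phi k l \<circ> \<tau>) (C_set l k)"
      by (rule inj_onI) (metis Phi_inj fun.inj_map_strong inj_eq)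
    have S1: "(\<Sum>\<sigma>\<in>C_set k l. perm_bracket br n a \<sigma>) = foldl br (br X Y) R"
      using C_sum[OF L k l n, of a] by (simp add: X_def Y_def R_def)
    have "(\<Sum>\<sigma>\<in>(\<lambda>\<tau>. Phi k l \<circ> \<tau>) ` C_set l k. perm_bracket br n a \<sigma>) =
        (\<Sum>\<tau>\<in>C_set l k. perm_bracket br n a (Phi k l \<circ> \<tau>))"
      using sum.reindex[OF inj, of "perm_bracket br n a"] unfolding comp_def by simp
    also have "\<dots> = (\<Sum>\<tau>\<in>C_set l k. perm_bracket br n a' \<tau>)"
      by (simp add: perm_bracket_def a'_def)
    also have "\<dots> = foldl br (br (foldl br (a' 1) (map a' [2..<l+1])) (foldl br (a' (l+1)) (map a' [l+2..<l+k+1]))) (map a' [l+k+1..<n+1])"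
      using C_sum[OF L l k, of n a'] n by (simp add: add.commute)
    also have "\<dots> = foldl br (br Y X) R"
    proof -
      have e1: "a' 1 = a (k+1)" using l by (simp add: a'_def Phi_def)
      have e2: "map a' [2..<l+1] = map a [k+2..<k+l+1]"
        by (rule shiftmap) (auto simp: a'_def Phi_def add.commute)
      have e3: "a' (l+1) = a 1" using k by (simp add: a'_def Phi_def)
      have e4: "map a' [l+2..<l+k+1] = map a [2..<k+1]"
        by (rule shiftmap) (auto simp: a'_def Phi_def add.commute)
      have e5: "map a' [l+k+1..<n+1] = map a [k+l+1..<n+1]"
        by (rule shiftmap) (auto simp: a'_def Phi_def add.commute)
      show ?thesis unfolding e1 e2 e3 e4 e5 X_def Y_def R_def ..
    qed
    finally have S2: "(\<Sum>\<sigma>\<in>(\<lambda>\<tau>. Phi k l \<circ> \<tau>) ` C_set l k. perm_bracket br n a \<sigma>) = foldl br (br Y X) R" .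
    have "(\<Sum>\<sigma>\<in>T_set_n k l n. perm_bracket br n a \<sigma>) =
        (\<Sum>\<sigma>\<in>C_set k l. perm_bracket br n a \<sigma>) + (\<Sum>\<sigma>\<in>(\<lambda>\<tau>. Phi k l \<circ> \<tau>) ` C_set l k. perm_bracket br n a \<sigma>)"
      unfolding Tn_eq[OF k l] T_split
      by (rule sum.union_disjoint) (use finC k l T_disj[OF k l] in auto)
    also have "\<dots> = foldl br (br X Y + br Y X) R" using S1 S2 foldl_add[OF L] by simp
    also have "\<dots> = 0" using lr_anti[OF L, of X Y] foldl_zero[OF L] by simp
    finally show "(\<Sum>\<sigma>\<in>T_set_n k l n. perm_bracket br n a \<sigma>) = 0" .
  qed
qed


theorem theorem1:
  fixes br :: "'a::ab_group_add \<Rightarrow> 'a \<Rightarrow> 'a" and k l n :: nat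
  assumes "lie_ring br" and "1 \<le> k" and "1 \<le> l" and "k + l \<le> n"
  shows "T_set_n k l n \<subseteq> {\<sigma>. \<sigma> permutes {1..n}} \<and> jacobi_in br n (T_set_n k l n)"
  using main[OF assms] .

end
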